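(* Let $P(t)(x)=x^n+a_2(t)x^{n-2}-\dots+(-1)^na_n(t)$ be a $C^\infty$ curve of real polynomials (with $a_1=0$), defined for $t$ near $0$, all of whose roots are real for every $t$. Then for every integer $r\ge0$ the following are equivalent: (1) $m(a_k)\ge kr$ for all $2\le k\le n$; (2) $m(\tilde\Delta_k)\ge k(k-1)r$ for all $2\le k\le n$; (3) $m(a_2)\ge 2r$.
   Context: Convention: a monic polynomial is written $P(x)=x^n-a_1x^{n-1}+a_2x^{n-2}-\dots+(-1)^na_n$, so $a_i=\sigma_i(x_1,\dots,x_n)$ is the $i$-th elementary symmetric function of its roots. Multiplicity: for a continuous real or complex valued function $f$ defined near $0$, $m(f)\in\{0,1,2,\dots\}\cup\{\infty\}$ is the supremum of all integers $p\ge0$ such that $f(t)=t^pg(t)$ near $0$ for some continuous function $g$; for a function $F$ on the space of polynomials and a fixed curve $P$, $m(F)$ means $m(t\mapsto F(P(t)))$. Power sums $s_i(x)=\sum_{j=1}^nx_j^i$ ($s_0=n$); $B_k(x)$ is the $k\times k$ matrix with $(i,j)$-entry $s_{i+j-2}(x)$, and $\Delta_k(x)=\det B_k(x)=\sum_{i_1<\dots<i_k}\prod_{1\le l<m\le k}(x_{i_l}-x_{i_m})^2$. Since $\Delta_k$ is symmetric there is a unique polynomial $\tilde\Delta_k$ with $\Delta_k(x)=\tilde\Delta_k(\sigma_1(x),\dots,\sigma_n(x))$; for a polynomial $P$ with coefficients $a_1,\dots,a_n$ one writes $\tilde\Delta_k(P)=\tilde\Delta_k(a_1,\dots,a_n)$.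 *)

theory Defs
  imports "Jordan_Normal_Form.Determinant" "HOL-Library.Extended_Nat"
    "HOL-Computational_Algebra.Polynomial" "HOL-Analysis.Derivative"
begin

definition esym :: "nat \<Rightarrow> nat \<Rightarrow> (nat \<Rightarrow> 'a::comm_ring_1) \<Rightarrow> 'a" where
  "esym n i x = (\<Sum>S\<in>{S. S \<subseteq> {..<n} \<and> card S = i}. \<Prod>j\<in>S. x j)"

definition psum :: "nat \<Rightarrow> nat \<Rightarrow> (nat \<Rightarrow> 'a::comm_ring_1) \<Rightarrow> 'a" where
  "psum n i x = (\<Sum>j<n. x j ^ i)"

text \<open>B_k(x): k x k matrix with (i,j) entry s_(i+j-2) (1-based), i.e. s_(i+j) 0-based.\<close>
definition Bmat :: "nat \<Rightarrow> nat \<Rightarrow> (nat \<Rightarrow> 'a::comm_ring_1) \<Rightarrow> 'a mat" where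
  "Bmat n k x = Matrix.mat k k (\<lambda>(i, j). psum n (i + j) x)"

definition Delta :: "nat \<Rightarrow> nat \<Rightarrow> (nat \<Rightarrow> 'a::comm_ring_1) \<Rightarrow> 'a" where
  "Delta n k x = Determinant.det (Bmat n k x)"

text \<open>tilde Delta_k(a_1,...,a_n): the value Delta_k(x) for any (complex) x with
  sigma_i(x) = a_i for 1 <= i <= n (well defined since Delta_k is symmetric;
  such x exist by the fundamental theorem of algebra).\<close>
definition tDelta :: "nat \<Rightarrow> nat \<Rightarrow> (nat \<Rightarrow> real) \<Rightarrow> real" where
  "tDelta n k a = Re (Delta n k (SOME x :: nat \<Rightarrow> complex.
       \<forall>i\<in>{1..n}. esym n i x = complex_of_real (a i)))"

definition mpoly :: "nat \<Rightarrow> (nat \<Rightarrow> real) \<Rightarrow> real poly" where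
  "mpoly n a = monom 1 n + (\<Sum>i\<in>{1..n}. monom ((-1) ^ i * a i) (n - i))"

definition hyperbolic :: "real poly \<Rightarrow> bool" where
  "hyperbolic p \<longleftrightarrow> (\<forall>z. poly (map_poly complex_of_real p) z = 0 \<longrightarrow> Im z = 0)"

definition mult0 :: "(real \<Rightarrow> real) \<Rightarrow> enat" where
  "mult0 f = Sup {enat p | p. \<exists>g \<delta>. \<delta> > 0 \<and> continuous_on {-\<delta><..<\<delta>} g \<and>
                    (\<forall>t\<in>{-\<delta><..<\<delta>}. f t = t ^ p * g t)}"

definition smooth_on :: "real set \<Rightarrow> (real \<Rightarrow> real) \<Rightarrow> bool" where
  "smooth_on S f \<longleftrightarrow> (\<forall>k. \<forall>t\<in>S. ((deriv ^^ k) f) differentiable (at t))"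

end

theory Submission
  imports Defs "HOL-Computational_Algebra.Fundamental_Theorem_Algebra"
begin


lemma esym_0[simp]: "esym n 0 x = 1"
proof -
  have "{S. S \<subseteq> {..<n} \<and> card S = 0} = {{}}"
    by (auto dest: finite_subset[of _ "{..<n}"])
  then show ?thesis by (simp add: esym_def)
qed

lemma esym_gt: "n < i \<Longrightarrow> esym n i x = 0"
proof -
  assume "n < i"
  have "{S. S \<subseteq> {..<n} \<and> card S = i} = {}"
  proof (rule ccontr)
    assume "{S. S \<subseteq> {..<n} \<and> card S = i} \<noteq> {}"
    then obtain S where "S \<subseteq> {..<n}" "card S = i" by auto
    then have "card S \<le> n" using card_mono[of "{..<n}" S] by auto
    with \<open>n < i\<close> \<open>card S = i\<close> show False by auto
  qed
  then show ?thesis unfolding esym_def by (simp only: sum.empty)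
qed

lemma esym_Suc: "esym (Suc n) (Suc i) x = esym n (Suc i) x + x n * esym n i x"
proof -
  let ?A = "{S. S \<subseteq> {..<Suc n} \<and> card S = Suc i}"
  let ?A1 = "{S. S \<subseteq> {..<n} \<and> card S = Suc i}"
  let ?B = "{S. S \<subseteq> {..<n} \<and> card S = i}"
  have fin1: "finite ?A1" by (rule finite_subset[of _ "Pow {..<n}"]) auto
  have finB: "finite ?B" by (rule finite_subset[of _ "Pow {..<n}"]) auto
  have eqA: "?A = ?A1 \<union> insert n ` ?B"
  proof (intro equalityI subsetI)
    fix S assume S: "S \<in> ?A"
    show "S \<in> ?A1 \<union> insert n ` ?B"
    proof (cases "n \<in> S")
      case True
      have "S = insert n (S - {n})" using True by auto
      moreover have "S - {n} \<in> ?B"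
        using S True finite_subset[of S "{..<Suc n}"] by (auto simp: card_Diff_singleton)
      ultimately show ?thesis by blast
    next
      case False
      then have "S \<subseteq> {..<n}" using S by (auto simp: less_Suc_eq)
      then show ?thesis using S by auto
    qed
  next
    fix S assume "S \<in> ?A1 \<union> insert n ` ?B"
    then show "S \<in> ?A"
    proof
      assume "S \<in> ?A1" then show ?thesis by auto
    next
      assume "S \<in> insert n ` ?B"
      then obtain T where T: "T \<in> ?B" "S = insert n T" by auto
      have "finite T" using T finite_subset[of T "{..<n}"] by auto
      moreover have "n \<notin> T" using T by auto
      ultimately show ?thesis using T by auto
    qed
  qed
  have disj: "?A1 \<inter> insert n ` ?B = {}" by auto
  have inj: "inj_on (insert n) ?B"
    by (rule inj_onI) (metis (mono_tags, lifting) insert_ident lessThan_iff mem_Collect_eq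
        order_less_irrefl subset_eq)
  have "esym (Suc n) (Suc i) x = (\<Sum>S\<in>?A1. \<Prod>j\<in>S. x j) + (\<Sum>S\<in>insert n ` ?B. \<Prod>j\<in>S. x j)"
    unfolding esym_def eqA using fin1 finB disj by (simp add: sum.union_disjoint)
  also have "(\<Sum>S\<in>insert n ` ?B. \<Prod>j\<in>S. x j) = (\<Sum>S\<in>?B. \<Prod>j\<in>insert n S. x j)"
    using inj by (simp add: sum.reindex)
  also have "\<dots> = (\<Sum>S\<in>?B. x n * (\<Prod>j\<in>S. x j))"
  proof (rule sum.cong[OF refl])
    fix S assume "S \<in> ?B"
    then have "finite S" "n \<notin> S" using finite_subset[of S "{..<n}"] by auto
    then show "(\<Prod>j\<in>insert n S. x j) = x n * (\<Prod>j\<in>S. x j)" by simp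
  qed
  also have "\<dots> = x n * esym n i x" by (simp add: esym_def sum_distrib_left)
  finally show ?thesis by (simp add: esym_def)
qed

lemma esym_Suc_gen: "esym (Suc n) j x = esym n j x + (if j = 0 then 0 else x n * esym n (j-1) x)"
  by (cases j) (simp_all add: esym_Suc)

lemma psum_Suc: "psum (Suc n) i x = psum n i x + x n ^ i"
  by (simp add: psum_def)

lemma newton:
  fixes x :: "nat \<Rightarrow> 'a::comm_ring_1"
  shows "of_nat m * esym n m x = (\<Sum>i=1..m. (-1)^(i-1) * esym n (m-i) x * psum n i x)"
proof (induction n arbitrary: m)
  case 0
  show ?case by (cases m) (simp_all add: esym_gt psum_def)
next
  case (Suc n)
  define e where "e = (\<lambda>j. esym n j x)"
  define e' where "e' = (\<lambda>j. esym (Suc n) j x)"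
  define s where "s = (\<lambda>i. psum n i x)"
  define y where "y = x n"
  have rec: "\<And>j. e' j = e j + (if j = 0 then 0 else y * e (j-1))"
    unfolding e_def e'_def y_def by (rule esym_Suc_gen)
  have ps: "\<And>i. psum (Suc n) i x = s i + y ^ i" unfolding s_def y_def by (rule psum_Suc)
  have IH: "\<And>m. of_nat m * e m = (\<Sum>i=1..m. (-1)^(i-1) * e (m-i) * s i)"
    unfolding e_def s_def by (rule Suc.IH)
  have tel: "(\<Sum>i\<le>m. (-1)^i * e' (m-i) * y^i) = e m" for m
  proof (induction m)
    case 0 then show ?case by (simp add: e_def e'_def)
  next
    case (Suc m)
    have "(\<Sum>i\<le>Suc m. (-1)^i * e' (Suc m-i) * y^i)
       = e' (Suc m) + (\<Sum>i\<le>m. (-1)^(Suc i) * e' (Suc m - Suc i) * y^(Suc i))"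
      by (subst sum.atMost_Suc_shift) simp
    also have "(\<Sum>i\<le>m. (-1)^(Suc i) * e' (Suc m - Suc i) * y^(Suc i))
       = - y * (\<Sum>i\<le>m. (-1)^i * e' (m - i) * y^i)"
      by (simp add: sum_distrib_left algebra_simps)
    also have "\<dots> = - y * e m" using Suc by simp
    finally show ?case using rec[of "Suc m"] by simp
  qed
  show ?case
  proof (cases m)
    case 0 then show ?thesis by simp
  next
    case (Suc m')
    have split: "(\<Sum>i=1..m. (-1)^(i-1) * e' (m-i) * psum (Suc n) i x)
      = (\<Sum>i=1..m. (-1)^(i-1) * e (m-i) * s i)
        + y * (\<Sum>i=1..m. (-1)^(i-1) * (if m - i = 0 then 0 else e (m-i-1)) * s i)
        + (\<Sum>i=1..m. (-1)^(i-1) * e' (m-i) * y ^ i)"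
    proof -
      have pw: "(-1)^(i-1) * e' (m-i) * psum (Suc n) i x = (-1)^(i-1) * e (m-i) * s i
          + y * ((-1)^(i-1) * (if m - i = 0 then 0 else e (m-i-1)) * s i)
          + (-1)^(i-1) * e' (m-i) * y ^ i" for i
        by (simp add: ps rec[of "m-i"] algebra_simps)
      show ?thesis by (simp only: pw sum.distrib sum_distrib_left)
    qed
    have t2: "(\<Sum>i=1..m. (-1)^(i-1) * (if m - i = 0 then 0 else e (m-i-1)) * s i)
       = (\<Sum>i=1..m'. (-1)^(i-1) * e (m'-i) * s i)"
    proof -
      have "(\<Sum>i=1..m. (-1)^(i-1) * (if m - i = 0 then 0 else e (m-i-1)) * s i)
         = (\<Sum>i=1..m'. (-1)^(i-1) * (if m - i = 0 then 0 else e (m-i-1)) * s i)"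
        unfolding Suc by (subst sum.cl_ivl_Suc) simp
      also have "\<dots> = (\<Sum>i=1..m'. (-1)^(i-1) * e (m'-i) * s i)"
        by (rule sum.cong) (auto simp: Suc)
      finally show ?thesis .
    qed
    have t3: "(\<Sum>i=1..m. (-1)^(i-1) * e' (m-i) * y ^ i) = e' m - e m"
    proof -
      have "e m = (\<Sum>i\<le>m. (-1)^i * e' (m-i) * y^i)" using tel by simp
      also have "\<dots> = e' m + (\<Sum>i=1..m. (-1)^i * e' (m-i) * y^i)"
        by (simp add: atMost_atLeast0 sum.atLeast_Suc_atMost)
      also have "(\<Sum>i=1..m. (-1)^i * e' (m-i) * y^i) = - (\<Sum>i=1..m. (-1)^(i-1) * e' (m-i) * y ^ i)"
        by (subst sum_negf[symmetric], rule sum.cong) (auto simp: power_eq_if)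
      finally show ?thesis by simp
    qed
    have "(\<Sum>i=1..m. (-1)^(i-1) * e' (m-i) * psum (Suc n) i x)
       = of_nat m * e m + y * (of_nat m' * e m') + (e' m - e m)"
      using split t2 t3 IH[of m] IH[of m'] by simp
    also have "\<dots> = of_nat m * e' m"
      using rec[of m] by (simp add: Suc algebra_simps)
    finally show ?thesis by (simp add: e'_def)
  qed
qed


fun NN :: "nat \<Rightarrow> (nat \<Rightarrow> 'a::comm_ring_1) \<Rightarrow> nat \<Rightarrow> 'a" where
 "NN n E m = (if m = 0 then of_nat n else (-1)^(m-1) * (of_nat m * E m - (\<Sum>i\<in>{1..<m}. (-1)^(i-1) * E (m-i) * NN n E i)))"

declare NN.simps[simp del]

lemma NN_0: "NN n E 0 = of_nat n" by (subst NN.simps) simp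

lemma NN_Suc: "NN n E (Suc m) = (-1)^m * (of_nat (Suc m) * E (Suc m) - (\<Sum>i\<in>{1..<Suc m}. (-1)^(i-1) * E (Suc m-i) * NN n E i))"
  by (subst NN.simps) simp

lemma neg1_sq: "((-1::'a::comm_ring_1)^k) * (-1)^k = 1"
  by (simp add: power_mult_distrib[symmetric])

lemma psum_NN:
  fixes x :: "nat \<Rightarrow> 'a::comm_ring_1"
  shows "psum n m x = NN n (\<lambda>j. esym n j x) m"
proof (induction m rule: less_induct)
  case (less m)
  show ?case
  proof (cases m)
    case 0 then show ?thesis by (simp add: psum_def NN_0)
  next
    case (Suc k)
    let ?e = "\<lambda>j. esym n j x"
    have "of_nat m * ?e m = (\<Sum>i=1..m. (-1)^(i-1) * ?e (m-i) * psum n i x)" by (rule newton)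
    also have "\<dots> = (\<Sum>i\<in>{1..<m}. (-1)^(i-1) * ?e (m-i) * psum n i x) + (-1)^k * psum n m x"
      unfolding Suc by (simp add: sum.atLeastLessThan_Suc atLeastLessThanSuc_atLeastAtMost[symmetric])
    also have "(\<Sum>i\<in>{1..<m}. (-1)^(i-1) * ?e (m-i) * psum n i x)
        = (\<Sum>i\<in>{1..<m}. (-1)^(i-1) * ?e (m-i) * NN n ?e i)"
      using less by (intro sum.cong) auto
    finally have eq: "of_nat m * ?e m = (\<Sum>i\<in>{1..<m}. (-1)^(i-1) * ?e (m-i) * NN n ?e i) + (-1)^k * psum n m x" .
    have "NN n ?e m = (-1)^k * (of_nat m * ?e m - (\<Sum>i\<in>{1..<m}. (-1)^(i-1) * ?e (m-i) * NN n ?e i))"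
      unfolding Suc by (rule NN_Suc)
    also have "\<dots> = (-1)^k * ((-1)^k * psum n m x)" by (simp add: eq)
    also have "\<dots> = psum n m x" by (simp add: mult.assoc[symmetric] neg1_sq)
    finally show ?thesis by simp
  qed
qed

lemma NN_scale:
  fixes c :: "'a::comm_ring_1"
  shows "NN n (\<lambda>j. c^j * E j) m = c^m * NN n E m"
proof (induction m rule: less_induct)
  case (less m)
  show ?case
  proof (cases m)
    case 0 then show ?thesis by (simp add: NN_0)
  next
    case (Suc k)
    have "(\<Sum>i\<in>{1..<m}. (-1)^(i-1) * (c^(m-i) * E (m-i)) * NN n (\<lambda>j. c^j * E j) i)
       = (\<Sum>i\<in>{1..<m}. c^m * ((-1)^(i-1) * E (m-i) * NN n E i))"
    proof (rule sum.cong[OF refl])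
      fix i assume i: "i \<in> {1..<m}"
      then have "c^m = c^(m-i) * c^i" by (simp add: power_add[symmetric])
      then show "(-1)^(i-1) * (c^(m-i) * E (m-i)) * NN n (\<lambda>j. c^j * E j) i = c^m * ((-1)^(i-1) * E (m-i) * NN n E i)"
        using less[of i] i by (simp add: algebra_simps)
    qed
    then show ?thesis unfolding Suc NN_Suc
      by (simp add: sum_distrib_left[symmetric] algebra_simps)
  qed
qed

lemma NN_cong: "(\<And>j. 0 < j \<Longrightarrow> j \<le> m \<Longrightarrow> E j = E' j) \<Longrightarrow> NN n E m = NN n E' m"
proof (induction m rule: less_induct)
  case (less m)
  show ?case
  proof (cases m)
    case 0 then show ?thesis by (simp add: NN_0)
  next
    case (Suc k)
    have "(\<Sum>i\<in>{1..<m}. (-1)^(i-1) * E (m-i) * NN n E i) = (\<Sum>i\<in>{1..<m}. (-1)^(i-1) * E' (m-i) * NN n E' i)"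
      using less by (intro sum.cong refl) auto
    then show ?thesis using less(2)[of m] unfolding Suc NN_Suc by simp
  qed
qed

lemma vieta:
  fixes x :: "nat \<Rightarrow> 'a::comm_ring_1"
  shows "coeff (\<Prod>j<n. [:-x j, 1:]) d = (if d \<le> n then (-1)^(n-d) * esym n (n-d) x else 0)"
proof (induction n arbitrary: d)
  case 0
  then show ?case by (cases d) simp_all
next
  case (Suc n)
  let ?P = "\<Prod>j<n. [:-x j, 1:]"
  have "(\<Prod>j<Suc n. [:-x j, 1:]) = ?P * [:-x n, 1:]" by simp
  also have "\<dots> = smult (- x n) ?P + pCons 0 ?P" by (simp add: mult_pCons_right)
  finally have eq: "(\<Prod>j<Suc n. [:-x j, 1:]) = smult (- x n) ?P + pCons 0 ?P" .
  show ?case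
  proof (cases d)
    case 0
    then show ?thesis unfolding eq using Suc[of 0] by (simp add: esym_Suc esym_gt)
  next
    case (Suc d')
    consider "d' = n" | "d' < n" | "d' > n" by linarith
    then show ?thesis
    proof cases
      case 1 then show ?thesis unfolding eq Suc using Suc.IH[of "Suc n"] Suc.IH[of n] by simp
    next
      case 2
      then obtain k where k: "n - d' = Suc k" "n - Suc d' = k" by (metis Suc_diff_Suc)
      show ?thesis unfolding eq Suc using Suc.IH[of "Suc d'"] Suc.IH[of d'] 2 k
        by (simp add: esym_Suc algebra_simps)
    next
      case 3 then show ?thesis unfolding eq Suc using Suc.IH[of "Suc d'"] Suc.IH[of d'] by simp
    qed
  qed
qed

lemma coeff_mpoly: "coeff (mpoly n b) d = (if d = n then 1 else if d < n then (-1)^(n-d) * b (n-d) else 0)"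
proof -
  have "coeff (mpoly n b) d = (if n = d then 1 else 0) + (\<Sum>i\<in>{1..n}. if n - i = d then (-1)^i * b i else 0)"
    by (simp add: mpoly_def coeff_sum coeff_monom)
  also have "(\<Sum>i\<in>{1..n}. if n - i = d then (-1)^i * b i else 0) = (\<Sum>i\<in>{1..n}. if i = n - d \<and> d < n then (-1)^(n-d) * b (n-d) else 0)"
    by (rule sum.cong) auto
  also have "\<dots> = (if d < n then (-1)^(n-d) * b (n-d) else 0)"
    by (cases "d < n") (simp_all add: sum.delta)
  finally show ?thesis by auto
qed

lemma coeff_cmpoly: "coeff (map_poly complex_of_real (mpoly n b)) d =
   (if d = n then 1 else if d < n then (-1)^(n-d) * of_real (b (n-d)) else 0)"
  by (simp add: coeff_map_poly coeff_mpoly)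

lemma cmpoly_eq:
  assumes "\<forall>i\<in>{1..n}. esym n i x = complex_of_real (b i)"
  shows "map_poly complex_of_real (mpoly n b) = (\<Prod>j<n. [:-x j, 1:])"
proof (rule poly_eqI)
  fix d
  show "coeff (map_poly complex_of_real (mpoly n b)) d = coeff (\<Prod>j<n. [:-x j, 1:]) d"
  proof (cases "d < n")
    case True
    then have "n - d \<in> {1..n}" by auto
    then show ?thesis using assms True by (simp add: coeff_cmpoly vieta)
  qed (auto simp: coeff_cmpoly vieta)
qed

lemma roots_exist: "\<exists>x::nat\<Rightarrow>complex. \<forall>i\<in>{1..n}. esym n i x = complex_of_real (b i)"
proof -
  let ?p = "map_poly complex_of_real (mpoly n b)"
  have dp: "degree ?p = n"
  proof (rule antisym)
    show "degree ?p \<le> n" by (rule degree_le) (simp add: coeff_cmpoly)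
    show "n \<le> degree ?p" by (rule le_degree) (simp add: coeff_cmpoly)
  qed
  have lp: "lead_coeff ?p = 1" using dp by (simp add: coeff_cmpoly)
  obtain root where r: "smult (lead_coeff ?p) (\<Prod>i<degree ?p. [:-root i, 1:]) = ?p"
    by (rule complex_poly_decompose')
  then have r': "(\<Prod>i<n. [:-root i, 1:]) = ?p" using dp lp by simp
  have "\<forall>i\<in>{1..n}. esym n i root = complex_of_real (b i)"
  proof
    fix i assume i: "i \<in> {1..n}"
    have "coeff (\<Prod>i<n. [:-root i, 1:]) (n-i) = coeff ?p (n-i)" using r' by simp
    then have "(-1)^i * esym n i root = (-1)^i * complex_of_real (b i)"
    proof -
      have "n - i < n" "n - (n - i) = i" using i by auto
      then show ?thesis using \<open>coeff (\<Prod>i<n. [:-root i, 1:]) (n-i) = coeff ?p (n-i)\<close>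
        by (simp add: vieta coeff_cmpoly)
    qed
    then show "esym n i root = complex_of_real (b i)"
      by simp
  qed
  then show ?thesis by blast
qed

lemma roots_real:
  assumes h: "hyperbolic (mpoly n b)" and e: "\<forall>i\<in>{1..n}. esym n i x = complex_of_real (b i)"
    and j: "j < n"
  shows "Im (x j) = 0"
proof -
  have "poly (map_poly complex_of_real (mpoly n b)) (x j) = (\<Prod>l<n. x j - x l)"
    by (simp add: cmpoly_eq[OF e] poly_prod)
  also have "\<dots> = 0" using j by (intro prod_zero) auto
  finally show ?thesis using h unfolding hyperbolic_def by blast
qed



lemma det_mat_expand:
  "Determinant.det (Matrix.mat k k F) = (\<Sum>p | p permutes {0..<k}. signof p * (\<Prod>i=0..<k. F (i, p i)))"
proof -
  have "Determinant.det (Matrix.mat k k F) = (\<Sum>p | p permutes {0..<k}. signof p * (\<Prod>i=0..<k. Matrix.mat k k F $$ (i, p i)))"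
    by (rule det_def') simp
  also have "\<dots> = (\<Sum>p | p permutes {0..<k}. signof p * (\<Prod>i=0..<k. F (i, p i)))"
  proof (rule sum.cong[OF refl])
    fix p assume "p \<in> {p. p permutes {0..<k}}"
    then have p: "p permutes {0..<k}" by simp
    show "signof p * (\<Prod>i=0..<k. Matrix.mat k k F $$ (i, p i)) = signof p * (\<Prod>i=0..<k. F (i, p i))"
      using permutes_in_image[OF p] by (intro arg_cong[where f="\<lambda>z. signof p * z"] prod.cong) auto
  qed
  finally show ?thesis .
qed

lemma gauss2: "(\<Sum>i=0..<k. i) * 2 = k * (k - 1::nat)"
proof (induction k)
  case (Suc k) then show ?case by (cases k) (auto simp: algebra_simps)
qed simp

lemma det_scale:
  fixes c :: "'a::comm_ring_1"
  shows "Determinant.det (Matrix.mat k k (\<lambda>(i,j). c^(i+j) * F (i,j))) = c^(k*(k-1)) * Determinant.det (Matrix.mat k k F)"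
proof -
  have "Determinant.det (Matrix.mat k k (\<lambda>(i,j). c^(i+j) * F (i,j)))
     = (\<Sum>p | p permutes {0..<k}. c^(k*(k-1)) * (signof p * (\<Prod>i=0..<k. F (i, p i))))"
    unfolding det_mat_expand
  proof (rule sum.cong[OF refl])
    fix p assume "p \<in> {p. p permutes {0..<k}}"
    then have p: "p permutes {0..<k}" by simp
    have s: "(\<Sum>i=0..<k. i + p i) = k*(k-1)"
    proof -
      have "(\<Sum>i=0..<k. p i) = (\<Sum>i=0..<k. i)"
        using sum.permute[OF p, of "\<lambda>i. i"] by (simp add: comp_def)
      then show ?thesis using gauss2[of k] by (simp add: sum.distrib)
    qed
    have "(\<Prod>i=0..<k. (\<lambda>(i,j). c^(i+j) * F (i,j)) (i, p i)) = (\<Prod>i=0..<k. c^(i + p i)) * (\<Prod>i=0..<k. F (i, p i))"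
      by (simp add: prod.distrib)
    also have "(\<Prod>i=0..<k. c^(i + p i)) = c^(k*(k-1))"
      by (simp add: power_sum[symmetric] s)
    finally show "signof p * (\<Prod>i=0..<k. (\<lambda>(i,j). c^(i+j) * F (i,j)) (i, p i)) = c^(k*(k-1)) * (signof p * (\<Prod>i=0..<k. F (i, p i)))"
      by (simp add: algebra_simps)
  qed
  also have "\<dots> = c^(k*(k-1)) * Determinant.det (Matrix.mat k k F)"
    unfolding det_mat_expand by (simp add: sum_distrib_left)
  finally show ?thesis .
qed

lemma mult0_ge:
  assumes "\<delta> > 0" "continuous_on {-\<delta><..<\<delta>} g" "\<forall>t\<in>{-\<delta><..<\<delta>}. f t = t^p * g t"
  shows "enat p \<le> mult0 f"
  unfolding mult0_def by (rule Sup_upper) (use assms in blast)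

lemma mult0_rep:
  assumes "enat p \<le> mult0 f" "0 < p"
  shows "\<exists>g \<delta>. \<delta> > 0 \<and> continuous_on {-\<delta><..<\<delta>} g \<and> (\<forall>t\<in>{-\<delta><..<\<delta>}. f t = t^p * g t)"
proof -
  have "enat (p - 1) < mult0 f" 
  proof -
    have "enat (p - 1) < enat p" using assms(2) by simp
    then show ?thesis using assms(1) by (rule less_le_trans)
  qed
  then obtain z where z: "z \<in> {enat p | p. \<exists>g \<delta>. \<delta> > 0 \<and> continuous_on {-\<delta><..<\<delta>} g \<and>
                    (\<forall>t\<in>{-\<delta><..<\<delta>}. f t = t ^ p * g t)}" "enat (p - 1) < z"
    unfolding mult0_def less_Sup_iff by blast
  then obtain q g \<delta> where q: "enat (p - 1) < enat q" and g: "\<delta> > 0" "continuous_on {-\<delta><..<\<delta>} g" "\<forall>t\<in>{-\<delta><..<\<delta>}. f t = t ^ q * g t"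
    by blast
  have pq: "q = p + (q - p)" using q assms(2) by auto
  show ?thesis
  proof (intro exI conjI)
    show "\<delta> > 0" by fact
    show "continuous_on {-\<delta><..<\<delta>} (\<lambda>t. t^(q-p) * g t)" using g by (intro continuous_intros) auto
    show "\<forall>t\<in>{-\<delta><..<\<delta>}. f t = t^p * (t^(q-p) * g t)"
      using g(3) pq by (metis mult.assoc power_add)
  qed
qed

lemma poly_vanish:
  fixes c :: "nat \<Rightarrow> real"
  assumes "0 < \<eta>" "\<forall>t. t \<noteq> 0 \<and> \<bar>t\<bar> < \<eta> \<longrightarrow> \<bar>\<Sum>j<m. c j * t^j\<bar> \<le> K * \<bar>t\<bar>^m" "j < m"
  shows "c j = 0"
  using assms(2,3)
proof (induction m arbitrary: c j)
  case 0 then show ?case by simp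
next
  case (Suc m)
  let ?P = "\<lambda>t. \<Sum>j<Suc m. c j * t^j"
  have P0: "?P 0 = c 0" by (simp add: sum.lessThan_Suc_shift)
  have "isCont ?P 0" by (intro continuous_intros)
  then have "(?P \<longlongrightarrow> ?P 0) (at 0)" by (rule isContD)
  then have "((\<lambda>t. \<bar>?P t\<bar>) \<longlongrightarrow> \<bar>?P 0\<bar>) (at 0)" by (rule tendsto_rabs)
  then have l1: "((\<lambda>t. \<bar>?P t\<bar>) \<longlongrightarrow> \<bar>c 0\<bar>) (at 0)" by (simp only: P0)
  have l2: "((\<lambda>t. K * \<bar>t\<bar>^Suc m) \<longlongrightarrow> K * \<bar>0\<bar>^Suc m) (at 0)"
    by (intro tendsto_intros)
  have ev: "eventually (\<lambda>t. \<bar>?P t\<bar> \<le> K * \<bar>t\<bar>^Suc m) (at 0)"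
    unfolding eventually_at using Suc.prems(1) \<open>0 < \<eta>\<close> by (intro exI[of _ \<eta>]) (auto simp: dist_real_def)
  have "\<bar>c 0\<bar> \<le> K * \<bar>0\<bar>^Suc m" by (rule tendsto_le[OF _ l2 l1 ev]) simp
  then have c0: "c 0 = 0" by simp
  have Q: "\<forall>t. t \<noteq> 0 \<and> \<bar>t\<bar> < \<eta> \<longrightarrow> \<bar>\<Sum>j<m. c (Suc j) * t^j\<bar> \<le> K * \<bar>t\<bar>^m"
  proof (intro allI impI)
    fix t :: real assume t: "t \<noteq> 0 \<and> \<bar>t\<bar> < \<eta>"
    have eq: "?P t = t * (\<Sum>j<m. c (Suc j) * t^j)"
      by (simp only: sum.lessThan_Suc_shift) (simp add: c0 sum_distrib_left algebra_simps)
    have h: "\<bar>?P t\<bar> \<le> K * \<bar>t\<bar>^Suc m" using Suc.prems(1) t by blast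
    have h1: "\<bar>?P t\<bar> = \<bar>t\<bar> * \<bar>\<Sum>j<m. c (Suc j) * t^j\<bar>" unfolding eq by (simp add: abs_mult)
    have h2: "K * \<bar>t\<bar>^Suc m = \<bar>t\<bar> * (K * \<bar>t\<bar>^m)" by simp
    have "\<bar>t\<bar> * \<bar>\<Sum>j<m. c (Suc j) * t^j\<bar> \<le> \<bar>t\<bar> * (K * \<bar>t\<bar>^m)"
      using h unfolding h1 h2 .
    then show "\<bar>\<Sum>j<m. c (Suc j) * t^j\<bar> \<le> K * \<bar>t\<bar>^m" using t by simp
  qed
  show ?case
  proof (cases j)
    case 0 then show ?thesis using c0 by simp
  next
    case (Suc j')
    then show ?thesis using Suc.IH[of "\<lambda>j. c (Suc j)" j'] Q Suc.prems(2) by simp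
  qed
qed


lemma abs_div_ge1: "(1::real) \<le> c \<Longrightarrow> \<bar>x\<bar> / c \<le> \<bar>x\<bar>"
  by (simp add: divide_le_eq mult_le_cancel_left1)

lemma taylor_rep:
  fixes f :: "real \<Rightarrow> real"
  assumes sm: "smooth_on {-\<epsilon><..<\<epsilon>} f" and d: "0 < \<delta>" "\<delta> \<le> \<epsilon>"
    and bd: "\<forall>t\<in>{-\<delta><..<\<delta>}. \<bar>f t\<bar> \<le> K * \<bar>t\<bar>^m"
  shows "\<exists>g. continuous_on {-\<delta><..<\<delta>} g \<and> (\<forall>t\<in>{-\<delta><..<\<delta>}. f t = t^m * g t)"
proof -
  define D where "D = (\<lambda>k. (deriv^^k) f)"
  have D0: "D 0 = f" by (simp add: D_def)
  have hD: "DERIV (D k) t :> D (Suc k) t" if t: "t \<in> {-\<epsilon><..<\<epsilon>}" for k t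
  proof -
    have "(D k) differentiable (at t)" using sm t unfolding smooth_on_def D_def by blast
    then have "DERIV (D k) t :> deriv (D k) t" by (simp add: DERIV_deriv_iff_real_differentiable)
    then show "DERIV (D k) t :> D (Suc k) t" by (simp add: D_def)
  qed
  have cD: "isCont (D k) t" if "t \<in> {-\<epsilon><..<\<epsilon>}" for k t using hD[OF that] DERIV_isCont by blast
  show ?thesis
  proof (cases "m = 0")
    case True
    show ?thesis
    proof (intro exI conjI)
      show "continuous_on {-\<delta><..<\<delta>} f"
        using cD[of _ 0] d by (intro continuous_at_imp_continuous_on) (auto simp: D0)
      show "\<forall>t\<in>{-\<delta><..<\<delta>}. f t = t^m * f t" using True by simp
    qed
  next
    case False
    then have m: "0 < m" by simp
    have tay: "\<exists>\<xi>. \<bar>\<xi>\<bar> \<le> \<bar>t\<bar> \<and> f t = (\<Sum>j<m. D j 0 / fact j * t^j) + D m \<xi> / fact m * t^m"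
      if t: "t \<in> {-\<delta><..<\<delta>}" for t
    proof -
      have "\<forall>k s. k < m \<and> \<bar>s\<bar> \<le> \<bar>t\<bar> \<longrightarrow> DERIV (D k) s :> D (Suc k) s"
        using t d by (intro allI impI hD) auto
      from Maclaurin_bi_le[OF D0 this] show ?thesis .
    qed
    have "continuous_on {-\<delta>/2..\<delta>/2} (D m)"
      using cD d by (intro continuous_at_imp_continuous_on) auto
    then have "compact (D m ` {-\<delta>/2..\<delta>/2})"
      by (rule compact_continuous_image) simp
    then have "bounded (D m ` {-\<delta>/2..\<delta>/2})" by (rule compact_imp_bounded)
    then obtain B where B: "B > 0" "\<forall>x\<in>D m ` {-\<delta>/2..\<delta>/2}. norm x \<le> B"
      unfolding bounded_pos by blast
    have coef: "D j 0 / fact j = 0" if j: "j < m" for j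
    proof (rule poly_vanish[where c="\<lambda>j. D j 0 / fact j" and \<eta>="\<delta>/2" and K="K + B / fact m" and m=m])
      show "0 < \<delta>/2" using d by simp
      show "j < m" by fact
      show "\<forall>t. t \<noteq> 0 \<and> \<bar>t\<bar> < \<delta>/2 \<longrightarrow> \<bar>\<Sum>j<m. D j 0 / fact j * t^j\<bar> \<le> (K + B / fact m) * \<bar>t\<bar>^m"
      proof (intro allI impI)
        fix t :: real assume t: "t \<noteq> 0 \<and> \<bar>t\<bar> < \<delta>/2"
        then have tin: "t \<in> {-\<delta><..<\<delta>}" by auto
        obtain \<xi> where \<xi>: "\<bar>\<xi>\<bar> \<le> \<bar>t\<bar>" "f t = (\<Sum>j<m. D j 0 / fact j * t^j) + D m \<xi> / fact m * t^m"
          using tay[OF tin] by blast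
        have "\<xi> \<in> {-\<delta>/2..\<delta>/2}" using \<xi>(1) t by auto
        then have "\<bar>D m \<xi>\<bar> \<le> B" using B by auto
        then have "\<bar>D m \<xi>\<bar> / fact m \<le> B / fact m" by (intro divide_right_mono) auto
        then have r0: "(\<bar>D m \<xi>\<bar> / fact m) * \<bar>t\<bar>^m \<le> B / fact m * \<bar>t\<bar>^m"
          by (rule mult_right_mono) simp
        have "\<bar>D m \<xi> / fact m * t^m\<bar> = (\<bar>D m \<xi>\<bar> / fact m) * \<bar>t\<bar>^m" by (simp add: abs_mult power_abs)
        then have r: "\<bar>D m \<xi> / fact m * t^m\<bar> \<le> B / fact m * \<bar>t\<bar>^m" using r0 by simp
        have "\<bar>\<Sum>j<m. D j 0 / fact j * t^j\<bar> = \<bar>f t - D m \<xi> / fact m * t^m\<bar>" using \<xi>(2) by simp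
        also have "\<dots> \<le> \<bar>f t\<bar> + \<bar>D m \<xi> / fact m * t^m\<bar>" by (rule abs_triangle_ineq4)
        also have "\<dots> \<le> K * \<bar>t\<bar>^m + B / fact m * \<bar>t\<bar>^m" using bd tin r by (intro add_mono) auto
        finally show "\<bar>\<Sum>j<m. D j 0 / fact j * t^j\<bar> \<le> (K + B / fact m) * \<bar>t\<bar>^m"
          by (simp add: algebra_simps)
      qed
    qed
    have tay0: "\<exists>\<xi>. \<bar>\<xi>\<bar> \<le> \<bar>t\<bar> \<and> f t = D m \<xi> / fact m * t^m" if t: "t \<in> {-\<delta><..<\<delta>}" for t
    proof -
      have "(\<Sum>j<m. D j 0 / fact j * t^j) = 0" using coef by simp
      then show ?thesis using tay[OF t] by simp
    qed
    have f0: "f 0 = 0"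
    proof -
      have "(0::real) \<in> {-\<delta><..<\<delta>}" using d by simp
      then have "\<bar>f 0\<bar> \<le> K * \<bar>0\<bar>^m" using bd by blast
      then show ?thesis using m by (simp add: power_0_left)
    qed
    define g where "g = (\<lambda>t. if t = 0 then D m 0 / fact m else f t / t^m)"
    show ?thesis
    proof (intro exI conjI)
      show "\<forall>t\<in>{-\<delta><..<\<delta>}. f t = t^m * g t" using f0 m by (auto simp: g_def)
      show "continuous_on {-\<delta><..<\<delta>} g"
      proof (rule continuous_at_imp_continuous_on, intro ballI)
        fix t0 assume t0: "t0 \<in> {-\<delta><..<\<delta>}"
        show "isCont g t0"
        proof (cases "t0 = 0")
          case False
          have ci: "isCont (\<lambda>t. f t / t^m) t0" using cD[of t0 0] t0 d False
            by (intro continuous_intros) (auto simp: D0)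
          have ev: "eventually (\<lambda>t. g t = f t / t^m) (nhds t0)"
            using t1_space_nhds[OF False] by eventually_elim (simp add: g_def)
          show ?thesis using isCont_cong[OF ev] ci by simp
        next
          case True
          have cm: "isCont (D m) 0" using cD d by auto
          show ?thesis unfolding True isCont_def LIM_eq
          proof (intro allI impI)
            fix r :: real assume r: "0 < r"
            from cm[unfolded isCont_def LIM_eq] r obtain s where
              s: "0 < s" "\<forall>x. x \<noteq> 0 \<and> norm (x - 0) < s \<longrightarrow> norm (D m x - D m 0) < r" by blast
            show "\<exists>s>0. \<forall>x. x \<noteq> 0 \<and> norm (x - 0) < s \<longrightarrow> norm (g x - g 0) < r"
            proof (intro exI[of _ "min s \<delta>"] conjI allI impI)
              show "0 < min s \<delta>" using s d by simp
              fix x :: real assume x: "x \<noteq> 0 \<and> norm (x - 0) < min s \<delta>"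
              then have xin: "x \<in> {-\<delta><..<\<delta>}" by auto
              obtain \<xi> where \<xi>: "\<bar>\<xi>\<bar> \<le> \<bar>x\<bar>" "f x = D m \<xi> / fact m * x^m" using tay0[OF xin] by blast
              have gx: "g x - g 0 = (D m \<xi> - D m 0) / fact m" using x \<xi> by (simp add: g_def diff_divide_distrib)
              have lt: "\<bar>D m \<xi> - D m 0\<bar> < r"
              proof (cases "\<xi> = 0")
                case True then show ?thesis using r by simp
              next
                case False then show ?thesis using s \<xi>(1) x by auto
              qed
              have "\<bar>D m \<xi> - D m 0\<bar> / fact m \<le> \<bar>D m \<xi> - D m 0\<bar>" by (rule abs_div_ge1) simp
              then show "norm (g x - g 0) < r" using lt gx by simp
            qed
          qed
        qed
      qed
    qed
  qed
qed



lemma Re_ofreal_mult: "Re (complex_of_real x * z) = x * Re z" by simp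

lemma NN_1: "NN n E (Suc 0) = E 1"
  by (simp add: NN_Suc)

lemma NN_2: "NN n E 2 = E 1 * E 1 - 2 * E 2"
proof -
  have "{1..<Suc (Suc 0)} = {1::nat}" by auto
  then show ?thesis by (simp add: numeral_2_eq_2 NN_Suc NN_1 algebra_simps)
qed

lemma NN_cont:
  fixes F :: "real \<Rightarrow> nat \<Rightarrow> complex"
  assumes "\<And>j. continuous_on U (\<lambda>t. F t j)"
  shows "continuous_on U (\<lambda>t. NN n (F t) m)"
proof (induction m rule: less_induct)
  case (less m)
  show ?case
  proof (cases m)
    case 0 then show ?thesis by (simp add: NN_0)
  next
    case (Suc k)
    have "continuous_on U (\<lambda>t. (-1)^k * (of_nat (Suc k) * F t (Suc k) - (\<Sum>i\<in>{1..<Suc k}. (-1)^(i-1) * F t (Suc k-i) * NN n (F t) i)))"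
      using less Suc assms by (intro continuous_intros) auto
    then show ?thesis unfolding Suc NN_Suc .
  qed
qed

lemma det_scale2:
  fixes c :: "'a::comm_ring_1"
  shows "Determinant.det (Matrix.mat k k (\<lambda>(i,j). c^(i+j) * G (i+j))) = c^(k*(k-1)) * Determinant.det (Matrix.mat k k (\<lambda>(i,j). G (i+j)))"
  using det_scale[where c=c and k=k and F="\<lambda>(i,j). G (i+j)"] by simp


theorem lemma3p7:
  fixes n r :: nat and a :: "nat \<Rightarrow> real \<Rightarrow> real" and \<epsilon> :: real
  assumes "n \<ge> 2" and "\<epsilon> > 0"
    and smooth: "\<forall>i\<in>{1..n}. smooth_on {-\<epsilon><..<\<epsilon>} (a i)"
    and a1: "\<forall>t\<in>{-\<epsilon><..<\<epsilon>}. a 1 t = 0"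
    and hyp: "\<forall>t\<in>{-\<epsilon><..<\<epsilon>}. hyperbolic (mpoly n (\<lambda>i. a i t))"
  shows "((\<forall>k\<in>{2..n}. mult0 (a k) \<ge> enat (k * r))
            \<longleftrightarrow> (\<forall>k\<in>{2..n}. mult0 (\<lambda>t. tDelta n k (\<lambda>i. a i t)) \<ge> enat (k * (k - 1) * r)))
       \<and> ((\<forall>k\<in>{2..n}. mult0 (\<lambda>t. tDelta n k (\<lambda>i. a i t)) \<ge> enat (k * (k - 1) * r))
            \<longleftrightarrow> mult0 (a 2) \<ge> enat (2 * r))"
proof -
  note n2 = \<open>n \<ge> 2\<close> and eps = \<open>\<epsilon> > 0\<close>
  define X where "X = (\<lambda>t. SOME x :: nat \<Rightarrow> complex. \<forall>i\<in>{1..n}. esym n i x = complex_of_real (a i t))"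
  have hX: "\<forall>i\<in>{1..n}. esym n i (X t) = complex_of_real (a i t)" for t
  proof -
    have "\<exists>x::nat\<Rightarrow>complex. \<forall>i\<in>{1..n}. esym n i x = complex_of_real (a i t)" by (rule roots_exist)
    then show ?thesis unfolding X_def by (rule someI_ex)
  qed
  have realX: "Im (X t j) = 0" if "t \<in> {-\<epsilon><..<\<epsilon>}" "j < n" for t j
    using roots_real[where b="\<lambda>i. a i t", OF hyp[rule_format, OF that(1)] hX that(2)] .
  define E where "E = (\<lambda>t j. if j = 0 then 1 else if j \<le> n then complex_of_real (a j t) else 0)"
  have eE: "(\<lambda>j. esym n j (X t)) = E t" for t
  proof
    fix j show "esym n j (X t) = E t j"
      using hX[of t] by (cases "j = 0"; cases "j \<le> n") (auto simp: E_def esym_gt)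
  qed
  have tD: "tDelta n k (\<lambda>i. a i t) = Re (Determinant.det (Matrix.mat k k (\<lambda>(i,j). NN n (E t) (i+j))))" for k t
  proof -
    have "tDelta n k (\<lambda>i. a i t) = Re (Delta n k (X t))" by (simp add: tDelta_def X_def)
    also have "\<dots> = Re (Determinant.det (Matrix.mat k k (\<lambda>(i,j). NN n (E t) (i+j))))"
      by (simp add: Delta_def Bmat_def psum_NN eE)
    finally show ?thesis .
  qed
  have E1: "E t 1 = 0" if "t \<in> {-\<epsilon><..<\<epsilon>}" for t using a1 that n2 by (simp add: E_def)
  have E2: "E t 2 = complex_of_real (a 2 t)" for t using n2 by (simp add: E_def)
  have ps2: "psum n 2 (X t) = - 2 * complex_of_real (a 2 t)" if "t \<in> {-\<epsilon><..<\<epsilon>}" for t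
    using E1[OF that] by (simp add: psum_NN eE NN_2 E2)
  have D2: "tDelta n 2 (\<lambda>i. a i t) = - 2 * real n * a 2 t" if t: "t \<in> {-\<epsilon><..<\<epsilon>}" for t
  proof -
    let ?A = "Matrix.mat 2 2 (\<lambda>(i,j). NN n (E t) (i+j))"
    have ut: "upper_triangular ?A"
      unfolding upper_triangular_def using E1[OF t]
      by (auto simp: NN_1 less_Suc_eq numeral_2_eq_2)
    have "Determinant.det ?A = prod_list (diag_mat ?A)"
      by (rule det_upper_triangular[OF ut], rule mat_carrier)
    also have "\<dots> = NN n (E t) 0 * NN n (E t) 2"
      by (simp add: diag_mat_def numeral_2_eq_2)
    also have "\<dots> = of_nat n * (- 2 * complex_of_real (a 2 t))"
      using E1[OF t] by (simp add: NN_0 NN_2 E2)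
    finally show ?thesis using tD[of 2 t] by simp
  qed
  have P23: "mult0 (a 2) \<ge> enat (2 * r)"
    if H: "\<forall>k\<in>{2..n}. mult0 (\<lambda>t. tDelta n k (\<lambda>i. a i t)) \<ge> enat (k * (k - 1) * r)"
  proof (cases "r = 0")
    case True then show ?thesis by (simp add: zero_enat_def[symmetric])
  next
    case False
    have "mult0 (\<lambda>t. tDelta n 2 (\<lambda>i. a i t)) \<ge> enat (2 * r)" using H n2 by force
    from mult0_rep[OF this] False obtain g \<delta> where g: "\<delta> > 0" "continuous_on {-\<delta><..<\<delta>} g"
      "\<forall>t\<in>{-\<delta><..<\<delta>}. tDelta n 2 (\<lambda>i. a i t) = t^(2*r) * g t" by auto
    show ?thesis
    proof (rule mult0_ge[where \<delta>="min \<delta> \<epsilon>" and g="\<lambda>t. g t / (- 2 * real n)"])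
      show "0 < min \<delta> \<epsilon>" using g eps by simp
      show "continuous_on {- min \<delta> \<epsilon><..<min \<delta> \<epsilon>} (\<lambda>t. g t / (- 2 * real n))"
        using n2 by (intro continuous_intros continuous_on_subset[OF g(2)]) auto
      show "\<forall>t\<in>{- min \<delta> \<epsilon><..<min \<delta> \<epsilon>}. a 2 t = t ^ (2 * r) * (g t / (- 2 * real n))"
      proof
        fix t assume t: "t \<in> {- min \<delta> \<epsilon><..<min \<delta> \<epsilon>}"
        have "- 2 * real n * a 2 t = t^(2*r) * g t" using D2[of t] g(3) t by auto
        then show "a 2 t = t ^ (2 * r) * (g t / (- 2 * real n))" using n2 by (simp add: field_simps)
      qed
    qed
  qed
  have P3: "(\<forall>k\<in>{2..n}. mult0 (a k) \<ge> enat (k * r)) \<and>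
            (\<forall>k\<in>{2..n}. mult0 (\<lambda>t. tDelta n k (\<lambda>i. a i t)) \<ge> enat (k * (k - 1) * r))"
    if H3: "mult0 (a 2) \<ge> enat (2 * r)"
  proof (cases "r = 0")
    case True then show ?thesis by (simp add: zero_enat_def[symmetric])
  next
    case False
    from mult0_rep[OF H3] False obtain g2 \<delta>2 where g2: "\<delta>2 > 0" "continuous_on {-\<delta>2<..<\<delta>2} g2"
      "\<forall>t\<in>{-\<delta>2<..<\<delta>2}. a 2 t = t^(2*r) * g2 t" by auto
    define \<delta>0 where "\<delta>0 = min \<delta>2 \<epsilon> / 2"
    have d0: "0 < \<delta>0" "\<delta>0 < \<delta>2" "\<delta>0 < \<epsilon>" using g2 eps by (auto simp: \<delta>0_def)
    have "continuous_on {-\<delta>0..\<delta>0} g2" using d0 by (intro continuous_on_subset[OF g2(2)]) auto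
    then have "compact (g2 ` {-\<delta>0..\<delta>0})" by (rule compact_continuous_image) simp
    then have "bounded (g2 ` {-\<delta>0..\<delta>0})" by (rule compact_imp_bounded)
    then obtain B where B: "B > 0" "\<forall>x\<in>g2 ` {-\<delta>0..\<delta>0}. norm x \<le> B"
      unfolding bounded_pos by blast
    have a2bd: "\<bar>a 2 t\<bar> \<le> B * \<bar>t\<bar>^(2*r)" if t: "t \<in> {-\<delta>0<..<\<delta>0}" for t
    proof -
      have "\<bar>g2 t\<bar> \<le> B" using B t by auto
      moreover have "a 2 t = t^(2*r) * g2 t" using g2(3) t d0 by auto
      ultimately show ?thesis by (simp add: abs_mult power_abs mult_right_mono mult.commute)
    qed
    define Dc where "Dc = sqrt (2 * B)"
    have Dc: "Dc \<ge> 0" "Dc^2 = 2 * B" using B by (auto simp: Dc_def)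
    have rootbd: "norm (X t j) \<le> Dc * \<bar>t\<bar>^r" if t: "t \<in> {-\<delta>0<..<\<delta>0}" and j: "j < n" for t j
    proof -
      have tS: "t \<in> {-\<epsilon><..<\<epsilon>}" using t d0 by auto
      have XR: "X t l = complex_of_real (Re (X t l))" if "l < n" for l
        using realX[OF tS that] by (simp add: complex_eq_iff)
      have "complex_of_real (\<Sum>l<n. (Re (X t l))^2) = (\<Sum>l<n. (X t l)^2)"
        using XR by simp
      also have "\<dots> = psum n 2 (X t)" by (simp add: psum_def)
      also have "\<dots> = complex_of_real (-2 * a 2 t)" using ps2[OF tS] by simp
      finally have ss: "(\<Sum>l<n. (Re (X t l))^2) = -2 * a 2 t" by (simp only: of_real_eq_iff)
      have "(Re (X t j))^2 \<le> (\<Sum>l<n. (Re (X t l))^2)"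
        using j by (intro member_le_sum) auto
      also have "\<dots> \<le> 2 * B * \<bar>t\<bar>^(2*r)" using ss a2bd[OF t] by simp
      also have "\<dots> = (Dc * \<bar>t\<bar>^r)^2" using Dc by (simp add: power_mult_distrib power_mult[symmetric] mult.commute)
      finally have "\<bar>Re (X t j)\<bar>^2 \<le> (Dc * \<bar>t\<bar>^r)^2" by simp
      then have "\<bar>Re (X t j)\<bar> \<le> Dc * \<bar>t\<bar>^r" by (rule power2_le_imp_le) (use Dc in simp)
      then show ?thesis using cmod_eq_Re[OF realX[OF tS j]] by simp
    qed
    define Sk where "Sk = (\<lambda>k. {S. S \<subseteq> {..<n} \<and> card S = k})"
    have abd: "\<bar>a k t\<bar> \<le> (real (card (Sk k)) * Dc^k) * \<bar>t\<bar>^(k*r)"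
      if k: "k \<in> {2..n}" and t: "t \<in> {-\<delta>0<..<\<delta>0}" for k t
    proof -
      have "a k t = Re (esym n k (X t))" using hX[of t] k by simp
      then have "\<bar>a k t\<bar> \<le> norm (esym n k (X t))" using abs_Re_le_cmod by simp
      also have "\<dots> \<le> (\<Sum>S\<in>Sk k. norm (\<Prod>j\<in>S. X t j))" unfolding esym_def Sk_def by (rule norm_sum)
      also have "\<dots> \<le> (\<Sum>S\<in>Sk k. (Dc * \<bar>t\<bar>^r)^k)"
      proof (rule sum_mono)
        fix S assume S: "S \<in> Sk k"
        have "norm (\<Prod>j\<in>S. X t j) = (\<Prod>j\<in>S. norm (X t j))" by (simp add: prod_norm)
        also have "\<dots> \<le> (\<Prod>j\<in>S. Dc * \<bar>t\<bar>^r)"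
          using S rootbd[OF t] by (intro prod_mono) (auto simp: Sk_def)
        also have "\<dots> = (Dc * \<bar>t\<bar>^r)^k" using S by (simp add: Sk_def)
        finally show "norm (\<Prod>j\<in>S. X t j) \<le> (Dc * \<bar>t\<bar>^r)^k" .
      qed
      also have "\<dots> = (real (card (Sk k)) * Dc^k) * \<bar>t\<bar>^(k*r)"
        by (simp add: power_mult_distrib power_mult[symmetric] mult.commute)
      finally show ?thesis .
    qed
    have rep: "\<exists>g. continuous_on {-\<delta>0<..<\<delta>0} g \<and> (\<forall>t\<in>{-\<delta>0<..<\<delta>0}. a k t = t^(k*r) * g t)"
      if k: "k \<in> {2..n}" for k
    proof (rule taylor_rep[where \<epsilon>=\<epsilon> and K="real (card (Sk k)) * Dc^k"])
      show "smooth_on {-\<epsilon><..<\<epsilon>} (a k)" using smooth k by auto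
      show "0 < \<delta>0" "\<delta>0 \<le> \<epsilon>" using d0 by auto
      show "\<forall>t\<in>{-\<delta>0<..<\<delta>0}. \<bar>a k t\<bar> \<le> real (card (Sk k)) * Dc ^ k * \<bar>t\<bar> ^ (k * r)"
        using abd[OF k] by blast
    qed
    have part1: "\<forall>k\<in>{2..n}. mult0 (a k) \<ge> enat (k * r)"
    proof
      fix k assume k: "k \<in> {2..n}"
      from rep[OF k] obtain g where "continuous_on {-\<delta>0<..<\<delta>0} g" "\<forall>t\<in>{-\<delta>0<..<\<delta>0}. a k t = t^(k*r) * g t"
        by blast
      then show "mult0 (a k) \<ge> enat (k * r)" using d0 by (intro mult0_ge) auto
    qed
    from rep obtain G where G: "\<forall>k\<in>{2..n}. continuous_on {-\<delta>0<..<\<delta>0} (G k) \<and>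
         (\<forall>t\<in>{-\<delta>0<..<\<delta>0}. a k t = t^(k*r) * G k t)"
      by metis
    define H where "H = (\<lambda>i. if i = 1 then (\<lambda>_::real. 0::real) else G i)"
    have HH: "a i t = t^(i*r) * H i t" if "i \<in> {1..n}" "t \<in> {-\<delta>0<..<\<delta>0}" for i t
    proof (cases "i = 1")
      case True
      then show ?thesis using a1 that d0 by (auto simp: H_def)
    next
      case False
      then have "i \<in> {2..n}" using that by auto
      then show ?thesis using G that False by (auto simp: H_def)
    qed
    have Hc: "continuous_on {-\<delta>0<..<\<delta>0} (H i)" if "i \<in> {1..n}" for i
    proof (cases "i = 1")
      case True then show ?thesis by (simp add: H_def)
    next
      case False
      then have "i \<in> {2..n}" using that by auto
      then show ?thesis using G False by (auto simp: H_def)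
    qed
    define F where "F = (\<lambda>t j. if j = 0 then 1 else if j \<le> n then complex_of_real (H j t) else 0)"
    have EF: "E t = (\<lambda>j. (complex_of_real (t^r))^j * F t j)" if t: "t \<in> {-\<delta>0<..<\<delta>0}" for t
    proof
      fix j
      show "E t j = (complex_of_real (t^r))^j * F t j"
      proof (cases "j = 0 \<or> n < j")
        case True then show ?thesis by (auto simp: E_def F_def)
      next
        case False
        then have j: "j \<in> {1..n}" by auto
        have "t^(j*r) = (t^r)^j" by (simp add: power_mult[symmetric] mult.commute)
        then show ?thesis using HH[OF j t] j by (simp add: E_def F_def)
      qed
    qed
    have Fc: "continuous_on {-\<delta>0<..<\<delta>0} (\<lambda>t. F t j)" for j
    proof (cases "j = 0 \<or> n < j")
      case True then show ?thesis by (auto simp: F_def)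
    next
      case False
      then have j: "j \<in> {1..n}" by auto
      have "continuous_on {-\<delta>0<..<\<delta>0} (\<lambda>t. complex_of_real (H j t))"
        using Hc[OF j] by (intro continuous_intros)
      then show ?thesis using j by (simp add: F_def)
    qed
    have part2: "\<forall>k\<in>{2..n}. mult0 (\<lambda>t. tDelta n k (\<lambda>i. a i t)) \<ge> enat (k * (k - 1) * r)"
    proof
      fix k assume k: "k \<in> {2..n}"
      define GD where "GD = (\<lambda>t. Re (Determinant.det (Matrix.mat k k (\<lambda>(i,j). NN n (F t) (i+j)))))"
      show "mult0 (\<lambda>t. tDelta n k (\<lambda>i. a i t)) \<ge> enat (k * (k - 1) * r)"
      proof (rule mult0_ge[where \<delta>=\<delta>0 and g=GD])
        show "0 < \<delta>0" by (rule d0)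
        show "continuous_on {-\<delta>0<..<\<delta>0} GD"
          unfolding GD_def det_mat_expand case_prod_conv
          by (intro continuous_intros NN_cont Fc)
        show "\<forall>t\<in>{-\<delta>0<..<\<delta>0}. tDelta n k (\<lambda>i. a i t) = t ^ (k * (k - 1) * r) * GD t"
        proof
          fix t assume t: "t \<in> {-\<delta>0<..<\<delta>0}"
          let ?c = "complex_of_real (t^r)"
          have "tDelta n k (\<lambda>i. a i t) = Re (Determinant.det (Matrix.mat k k (\<lambda>(i,j). ?c^(i+j) * NN n (F t) (i+j))))"
            unfolding tD EF[OF t] NN_scale ..
          also have "\<dots> = Re (?c^(k*(k-1)) * Determinant.det (Matrix.mat k k (\<lambda>(i,j). NN n (F t) (i+j))))"
            by (simp only: det_scale2)
          also have "\<dots> = (t^r)^(k*(k-1)) * GD t"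
            unfolding GD_def by (simp only: of_real_power[symmetric] Re_ofreal_mult) 
          also have "(t^r)^(k*(k-1)) = t^(k*(k-1)*r)" by (simp add: power_mult[symmetric] mult.commute)
          finally show "tDelta n k (\<lambda>i. a i t) = t ^ (k * (k - 1) * r) * GD t" .
        qed
      qed
    qed
    show ?thesis using part1 part2 by blast
  qed
  have T1: "(\<forall>k\<in>{2..n}. mult0 (a k) \<ge> enat (k * r)) \<longleftrightarrow> mult0 (a 2) \<ge> enat (2 * r)"
    using P3 n2 by force
  have T2: "(\<forall>k\<in>{2..n}. mult0 (\<lambda>t. tDelta n k (\<lambda>i. a i t)) \<ge> enat (k * (k - 1) * r)) \<longleftrightarrow> mult0 (a 2) \<ge> enat (2 * r)"
    using P3 P23 by blast
  show ?thesis using T1 T2 by blast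
qed

end
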